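(* (i) For all configurations $\gamma,\gamma'$ with $\gamma\to_d\gamma'$: $\gamma^{\bot}\le_d\gamma'^{\bot}$ and $\gamma'^{\top}\le_d\gamma^{\top}$. (ii) For all configurations $\gamma_0,\gamma$ such that $\gamma$ is reachable from $\gamma_0$ by a finite number (possibly zero) of d-steps: $\gamma_0^{\bot}\le_d\gamma\le_d\gamma_0^{\top}$.
   Context: Let $G$ be a finite, connected, undirected graph with node set $V$ and a distinguished node $r$ (the root); $\mathrm{dist}(p,r)$ denotes graph distance. Each node $p$ has a fixed ordered list $N(p)$ of its neighbours. A configuration $\gamma$ assigns to each node $p$ a value $\gamma.p.d\in\mathbb N$ and a neighbour $\gamma.p.par\in N(p)$. For a non-root node $p$ let $Dist_p(\gamma)=\min\{\gamma.q.d+1 : q\in N(p)\}$. Algorithm BFS: Root enabled iff $\gamma.r.d\neq 0$, executing sets $r.d:=0$. Non-root $p$, action CD: enabled iff $\gamma.p.d\ne Dist_p(\gamma)$, executing sets $p.d:=Dist_p(\gamma)$. Non-root $p$, action CP: enabled iff $\gamma.p.d=Dist_p(\gamma)$ and $\gamma.q_0.d+1\neq\gamma.p.d$ with $q_0=\gamma.p.par$; executing sets $p.par$ to the first $q\in N(p)$ with $\gamma.q.d+1=\gamma.p.d$. A step $\gamma\to\gamma'$ holds iff a nonempty set $S$ of enabled nodes simultaneously execute their enabled action (evaluated in $\gamma$), others unchanged. A d-step $\gamma\to_d\gamma'$ is a step with $\gamma.r.d=\gamma'.r.d$ and $\gamma.p.d\neq\gamma'.p.d$ for some $p$. $\min_d\gamma=\min\{\gamma.q.d:q\in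 V\}$. Bottom/top configurations: equal to $\gamma$ except $\gamma^{\bot}.p.d=\min_d\gamma$ for all $p$; $\gamma^{\top}.r.d=\gamma.r.d$ and for $p\neq r$, $\gamma^{\top}.p.d=\max\big(\gamma.p.d,\;1+\min\{\gamma^{\top}.q.d : q \text{ adjacent to } p,\ \mathrm{dist}(p,r)=1+\mathrm{dist}(q,r)\}\big)$. $\gamma_1\le_d\gamma_2$ iff $\gamma_1.q.d\le\gamma_2.q.d$ for all $q\in V$. *)

theory Defs
  imports Main
begin

definition adj_rel :: "('v \<Rightarrow> 'v list) \<Rightarrow> ('v \<times> 'v) set" where
  "adj_rel N = {(p, q). q \<in> set (N p)}"

definition bfs_graph :: "'v set \<Rightarrow> ('v \<Rightarrow> 'v list) \<Rightarrow> 'v \<Rightarrow> bool" where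
  "bfs_graph V N r \<longleftrightarrow>
     finite V \<and> r \<in> V \<and>
     (\<forall>p\<in>V. set (N p) \<subseteq> V \<and> distinct (N p) \<and> p \<notin> set (N p)) \<and>
     (\<forall>p\<in>V. \<forall>q\<in>V. q \<in> set (N p) \<longleftrightarrow> p \<in> set (N q)) \<and>
     (\<forall>p\<in>V. (p, r) \<in> (adj_rel N)\<^sup>*)"

definition gdist :: "('v \<Rightarrow> 'v list) \<Rightarrow> 'v \<Rightarrow> 'v \<Rightarrow> nat" where
  "gdist N p q = (LEAST n. (p, q) \<in> (adj_rel N) ^^ n)"

record 'v config =
  cd :: "'v \<Rightarrow> nat"
  cpar :: "'v \<Rightarrow> 'v"

definition is_config :: "'v set \<Rightarrow> ('v \<Rightarrow> 'v list) \<Rightarrow> 'v config \<Rightarrow> bool" where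
  "is_config V N \<gamma> \<longleftrightarrow> (\<forall>p\<in>V. cpar \<gamma> p \<in> set (N p))"

definition Dist :: "('v \<Rightarrow> 'v list) \<Rightarrow> 'v config \<Rightarrow> 'v \<Rightarrow> nat" where
  "Dist N \<gamma> p = Min ((\<lambda>q. cd \<gamma> q + 1) ` set (N p))"

definition enabled :: "('v \<Rightarrow> 'v list) \<Rightarrow> 'v \<Rightarrow> 'v config \<Rightarrow> 'v \<Rightarrow> bool" where
  "enabled N r \<gamma> p \<longleftrightarrow>
     (if p = r then cd \<gamma> r \<noteq> 0
      else cd \<gamma> p \<noteq> Dist N \<gamma> p \<or>
           (cd \<gamma> p = Dist N \<gamma> p \<and> cd \<gamma> (cpar \<gamma> p) + 1 \<noteq> cd \<gamma> p))"

definition exec :: "('v \<Rightarrow> 'v list) \<Rightarrow> 'v \<Rightarrow> 'v config \<Rightarrow> 'v \<Rightarrow> nat \<times> 'v" where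
  "exec N r \<gamma> p =
     (if p = r then (0, cpar \<gamma> p)
      else if cd \<gamma> p \<noteq> Dist N \<gamma> p then (Dist N \<gamma> p, cpar \<gamma> p)
      else (cd \<gamma> p, the (find (\<lambda>q. cd \<gamma> q + 1 = cd \<gamma> p) (N p))))"

definition step :: "'v set \<Rightarrow> ('v \<Rightarrow> 'v list) \<Rightarrow> 'v \<Rightarrow> 'v config \<Rightarrow> 'v config \<Rightarrow> bool" where
  "step V N r \<gamma> \<gamma>' \<longleftrightarrow>
     (\<exists>S. S \<noteq> {} \<and> S \<subseteq> V \<and> (\<forall>p\<in>S. enabled N r \<gamma> p) \<and>
          (\<forall>p\<in>S. (cd \<gamma>' p, cpar \<gamma>' p) = exec N r \<gamma> p) \<and>
          (\<forall>p. p \<notin> S \<longrightarrow> cd \<gamma>' p = cd \<gamma> p \<and> cpar \<gamma>' p = cpar \<gamma> p))"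

definition dstep :: "'v set \<Rightarrow> ('v \<Rightarrow> 'v list) \<Rightarrow> 'v \<Rightarrow> 'v config \<Rightarrow> 'v config \<Rightarrow> bool" where
  "dstep V N r \<gamma> \<gamma>' \<longleftrightarrow>
     step V N r \<gamma> \<gamma>' \<and> cd \<gamma> r = cd \<gamma>' r \<and> (\<exists>p\<in>V. cd \<gamma> p \<noteq> cd \<gamma>' p)"

definition min_d :: "'v set \<Rightarrow> 'v config \<Rightarrow> nat" where
  "min_d V \<gamma> = Min (cd \<gamma> ` V)"

definition bot_cfg :: "'v set \<Rightarrow> 'v config \<Rightarrow> 'v config" where
  "bot_cfg V \<gamma> = \<gamma>\<lparr>cd := (\<lambda>p. min_d V \<gamma>)\<rparr>"

primrec top_lvl :: "('v \<Rightarrow> 'v list) \<Rightarrow> 'v \<Rightarrow> 'v config \<Rightarrow> nat \<Rightarrow> 'v \<Rightarrow> nat" where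
  "top_lvl N r \<gamma> 0 p = cd \<gamma> p"
| "top_lvl N r \<gamma> (Suc k) p =
     max (cd \<gamma> p) (1 + Min {top_lvl N r \<gamma> k q | q. q \<in> set (N p) \<and> gdist N q r = k})"

definition top_cfg :: "('v \<Rightarrow> 'v list) \<Rightarrow> 'v \<Rightarrow> 'v config \<Rightarrow> 'v config" where
  "top_cfg N r \<gamma> = \<gamma>\<lparr>cd := (\<lambda>p. top_lvl N r \<gamma> (gdist N p r) p)\<rparr>"

definition le_d :: "'v set \<Rightarrow> 'v config \<Rightarrow> 'v config \<Rightarrow> bool" where
  "le_d V \<gamma>1 \<gamma>2 \<longleftrightarrow> (\<forall>q\<in>V. cd \<gamma>1 q \<le> cd \<gamma>2 q)"

end

theory Submission
  imports Defs
begin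

lemma graph_facts:
  assumes "bfs_graph V N r"
  shows "finite V" "r \<in> V" "\<And>p. p \<in> V \<Longrightarrow> set (N p) \<subseteq> V"
    "\<And>p. p \<in> V \<Longrightarrow> (p, r) \<in> (adj_rel N)\<^sup>*"
  using assms unfolding bfs_graph_def by auto

lemma nonroot_nbr:
  assumes "bfs_graph V N r" "p \<in> V" "p \<noteq> r"
  shows "set (N p) \<noteq> {}"
proof -
  have "(p, r) \<in> (adj_rel N)\<^sup>*" using graph_facts(4)[OF assms(1,2)] .
  then obtain y where "(p, y) \<in> adj_rel N" using assms(3)
    by (metis converse_rtranclE)
  then show ?thesis by (auto simp: adj_rel_def)
qed

lemma gdist_ex:
  assumes "bfs_graph V N r" "p \<in> V"
  shows "(p, r) \<in> (adj_rel N) ^^ gdist N p r"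
proof -
  have "(p, r) \<in> (adj_rel N)\<^sup>*" using graph_facts(4)[OF assms(1,2)] .
  then obtain n where "(p, r) \<in> (adj_rel N) ^^ n" using rtrancl_power by blast
  then show ?thesis unfolding gdist_def by (rule LeastI)
qed

lemma gdist_root: "gdist N r r = 0"
  unfolding gdist_def by (rule Least_eq_0) simp

lemma gdist0:
  assumes "bfs_graph V N r" "p \<in> V" "gdist N p r = 0"
  shows "p = r"
proof -
  have "(p, r) \<in> (adj_rel N) ^^ 0" using gdist_ex[OF assms(1,2)] assms(3) by (simp only:)
  then show ?thesis by (simp only: relpow.simps(1) pair_in_Id_conv)
qed

lemma gdistS:
  assumes "bfs_graph V N r" "p \<in> V" "gdist N p r = Suc k"
  shows "\<exists>q\<in>set (N p). gdist N q r = k"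
proof -
  have "(p, r) \<in> (adj_rel N) ^^ Suc k" using gdist_ex[OF assms(1,2)] assms(3) by (simp only:)
  then obtain q where q1: "(p, q) \<in> adj_rel N" and q2: "(q, r) \<in> (adj_rel N) ^^ k"
    using relpow_Suc_D2[where R="adj_rel N"] by blast
  have qN: "q \<in> set (N p)" using q1 by (simp add: adj_rel_def)
  have le: "gdist N q r \<le> k" unfolding gdist_def using q2 by (rule Least_le)
  have qV: "q \<in> V" using qN graph_facts(3)[OF assms(1,2)] by auto
  have "(q, r) \<in> (adj_rel N) ^^ gdist N q r" using gdist_ex[OF assms(1) qV] .
  with q1 have "(p, r) \<in> (adj_rel N) ^^ Suc (gdist N q r)"
    by (rule relpow_Suc_I2)
  then have "gdist N p r \<le> Suc (gdist N q r)" unfolding gdist_def by (rule Least_le)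
  with assms(3) le have "gdist N q r = k" by simp
  with qN show ?thesis by blast
qed

lemma cd_le_top: "cd \<gamma> p \<le> top_lvl N r \<gamma> k p"
  by (cases k) auto

lemma Dist_le: "q \<in> set (N p) \<Longrightarrow> Dist N \<gamma> p \<le> cd \<gamma> q + 1"
  unfolding Dist_def by (rule Min_le) auto

lemma dstep_cases:
  assumes "dstep V N r \<gamma> \<gamma>'"
  shows "cd \<gamma>' p = cd \<gamma> p \<or> (p \<in> V \<and> p \<noteq> r \<and> cd \<gamma>' p = Dist N \<gamma> p)"
proof -
  from assms obtain S where S: "S \<subseteq> V"
    "\<forall>p\<in>S. (cd \<gamma>' p, cpar \<gamma>' p) = exec N r \<gamma> p"
    "\<forall>p. p \<notin> S \<longrightarrow> cd \<gamma>' p = cd \<gamma> p \<and> cpar \<gamma>' p = cpar \<gamma> p"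
    and root: "cd \<gamma> r = cd \<gamma>' r"
    unfolding dstep_def step_def by blast
  show ?thesis
  proof (cases "p \<in> S")
    case False then show ?thesis using S(3) by auto
  next
    case True
    then have e: "(cd \<gamma>' p, cpar \<gamma>' p) = exec N r \<gamma> p" using S(2) by blast
    show ?thesis
    proof (cases "p = r")
      case True then show ?thesis using root by simp
    next
      case False
      have pV: "p \<in> V" using True S(1) by blast
      show ?thesis
      proof (cases "cd \<gamma> p \<noteq> Dist N \<gamma> p")
        case c: True
        have "exec N r \<gamma> p = (Dist N \<gamma> p, cpar \<gamma> p)" unfolding exec_def using False c by simp
        then show ?thesis using e pV False by simp
      next
        case c: False
        have "fst (exec N r \<gamma> p) = cd \<gamma> p" unfolding exec_def using False c by simp
        then show ?thesis using e by (metis fst_conv)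
      qed
    qed
  qed
qed

lemma min_d_le:
  assumes "bfs_graph V N r" "q \<in> V"
  shows "min_d V \<gamma> \<le> cd \<gamma> q"
  unfolding min_d_def using graph_facts(1)[OF assms(1)] assms(2) by (intro Min_le) auto

lemma min_d_mono:
  assumes G: "bfs_graph V N r" and D: "dstep V N r \<gamma> \<gamma>'"
  shows "min_d V \<gamma> \<le> min_d V \<gamma>'"
proof -
  have "\<forall>q\<in>V. min_d V \<gamma> \<le> cd \<gamma>' q"
  proof
    fix q assume qV: "q \<in> V"
    from dstep_cases[OF D, of q] show "min_d V \<gamma> \<le> cd \<gamma>' q"
    proof
      assume "cd \<gamma>' q = cd \<gamma> q" then show ?thesis using min_d_le[OF G qV] by simp
    next
      assume h: "q \<in> V \<and> q \<noteq> r \<and> cd \<gamma>' q = Dist N \<gamma> q"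
      have ne: "set (N q) \<noteq> {}" using nonroot_nbr[OF G] h by blast
      have "Dist N \<gamma> q \<in> (\<lambda>q'. cd \<gamma> q' + 1) ` set (N q)"
        unfolding Dist_def using ne by (intro Min_in) auto
      then obtain q' where q': "q' \<in> set (N q)" "Dist N \<gamma> q = cd \<gamma> q' + 1" by blast
      have "q' \<in> V" using q' graph_facts(3)[OF G qV] by auto
      then have "min_d V \<gamma> \<le> cd \<gamma> q'" using min_d_le[OF G] by blast
      then show ?thesis using h q' by simp
    qed
  qed
  then show ?thesis unfolding min_d_def[of V \<gamma>']
    using graph_facts(1,2)[OF G] by (intro Min.boundedI) auto
qed

lemma top_mono:
  assumes G: "bfs_graph V N r" and D: "dstep V N r \<gamma> \<gamma>'"
  shows "\<forall>p\<in>V. gdist N p r = k \<longrightarrow> top_lvl N r \<gamma>' k p \<le> top_lvl N r \<gamma> k p"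
proof (induction k)
  case 0
  show ?case
  proof (intro ballI impI)
    fix p assume "p \<in> V" "gdist N p r = 0"
    then have "p = r" using gdist0[OF G] by blast
    then show "top_lvl N r \<gamma>' 0 p \<le> top_lvl N r \<gamma> 0 p"
      using D unfolding dstep_def by simp
  qed
next
  case (Suc k)
  show ?case
  proof (intro ballI impI)
    fix p assume pV: "p \<in> V" and gp: "gdist N p r = Suc k"
    define S1 where "S1 = {top_lvl N r \<gamma>' k q | q. q \<in> set (N p) \<and> gdist N q r = k}"
    define S2 where "S2 = {top_lvl N r \<gamma> k q | q. q \<in> set (N p) \<and> gdist N q r = k}"
    have f1: "finite S1" unfolding S1_def
      by (rule finite_subset[of _ "(\<lambda>q. top_lvl N r \<gamma>' k q) ` set (N p)"]) auto
    have f2: "finite S2" unfolding S2_def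
      by (rule finite_subset[of _ "(\<lambda>q. top_lvl N r \<gamma> k q) ` set (N p)"]) auto
    obtain q0 where q0: "q0 \<in> set (N p)" "gdist N q0 r = k" using gdistS[OF G pV gp] by blast
    have ne2: "S2 \<noteq> {}" unfolding S2_def using q0 by blast
    have "Min S2 \<in> S2" using f2 ne2 by (rule Min_in)
    then obtain q where q: "q \<in> set (N p)" "gdist N q r = k" "Min S2 = top_lvl N r \<gamma> k q"
      unfolding S2_def by blast
    have qV: "q \<in> V" using q graph_facts(3)[OF G pV] by auto
    have "top_lvl N r \<gamma>' k q \<in> S1" unfolding S1_def using q by blast
    then have "Min S1 \<le> top_lvl N r \<gamma>' k q" using f1 by (rule Min_le[rotated])
    also have "\<dots> \<le> top_lvl N r \<gamma> k q" using Suc.IH qV q(2) by blast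
    finally have m: "Min S1 \<le> Min S2" using q(3) by simp
    have top2: "top_lvl N r \<gamma> (Suc k) p = max (cd \<gamma> p) (1 + Min S2)"
      unfolding S2_def by simp
    have top1: "top_lvl N r \<gamma>' (Suc k) p = max (cd \<gamma>' p) (1 + Min S1)"
      unfolding S1_def by simp
    have "cd \<gamma>' p \<le> max (cd \<gamma> p) (1 + Min S2)"
      using dstep_cases[OF D, of p]
    proof
      assume "cd \<gamma>' p = cd \<gamma> p" then show ?thesis by simp
    next
      assume "p \<in> V \<and> p \<noteq> r \<and> cd \<gamma>' p = Dist N \<gamma> p"
      then have "cd \<gamma>' p \<le> cd \<gamma> q + 1" using Dist_le[where N=N and p=p and q=q and \<gamma>=\<gamma>] q(1) by simp
      also have "\<dots> \<le> top_lvl N r \<gamma> k q + 1" using cd_le_top by simp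
      finally show ?thesis using q(3) by simp
    qed
    then show "top_lvl N r \<gamma>' (Suc k) p \<le> top_lvl N r \<gamma> (Suc k) p"
      using top1 top2 m by simp
  qed
qed

lemma part1:
  assumes G: "bfs_graph V N r" and D: "dstep V N r \<gamma> \<gamma>'"
  shows "le_d V (bot_cfg V \<gamma>) (bot_cfg V \<gamma>') \<and> le_d V (top_cfg N r \<gamma>') (top_cfg N r \<gamma>)"
  using min_d_mono[OF G D] top_mono[OF G D]
  unfolding le_d_def bot_cfg_def top_cfg_def by auto

lemma le_top: "le_d V \<gamma> (top_cfg N r \<gamma>)"
  unfolding le_d_def top_cfg_def by (simp add: cd_le_top)

lemma part2:
  assumes G: "bfs_graph V N r" and R: "(dstep V N r)\<^sup>*\<^sup>* \<gamma>0 \<gamma>"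
  shows "min_d V \<gamma>0 \<le> min_d V \<gamma> \<and> le_d V (top_cfg N r \<gamma>) (top_cfg N r \<gamma>0)"
  using R
proof (induction rule: rtranclp_induct)
  case base then show ?case by (simp add: le_d_def)
next
  case (step y z)
  have "le_d V (bot_cfg V y) (bot_cfg V z) \<and> le_d V (top_cfg N r z) (top_cfg N r y)"
    using part1[OF G step.hyps(2)] .
  then have "min_d V y \<le> min_d V z" "le_d V (top_cfg N r z) (top_cfg N r y)"
    using min_d_mono[OF G step.hyps(2)] by auto
  then show ?case using step.IH unfolding le_d_def by (meson order_trans)
qed

theorem lemma4:
  fixes V :: "'v set" and N :: "'v \<Rightarrow> 'v list" and r :: 'v
  assumes "bfs_graph V N r"
  shows "(\<forall>\<gamma> \<gamma>'. is_config V N \<gamma> \<and> dstep V N r \<gamma> \<gamma>' \<longrightarrow>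
            le_d V (bot_cfg V \<gamma>) (bot_cfg V \<gamma>') \<and>
            le_d V (top_cfg N r \<gamma>') (top_cfg N r \<gamma>))
       \<and> (\<forall>\<gamma>0 \<gamma>. is_config V N \<gamma>0 \<and> (dstep V N r)\<^sup>*\<^sup>* \<gamma>0 \<gamma> \<longrightarrow>
            le_d V (bot_cfg V \<gamma>0) \<gamma> \<and> le_d V \<gamma> (top_cfg N r \<gamma>0))"
proof (intro conjI allI impI)
  fix \<gamma> \<gamma>' assume "is_config V N \<gamma> \<and> dstep V N r \<gamma> \<gamma>'"
  then show "le_d V (bot_cfg V \<gamma>) (bot_cfg V \<gamma>')" "le_d V (top_cfg N r \<gamma>') (top_cfg N r \<gamma>)"
    using part1[OF assms] by auto
next
  fix \<gamma>0 \<gamma> assume h: "is_config V N \<gamma>0 \<and> (dstep V N r)\<^sup>*\<^sup>* \<gamma>0 \<gamma>"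
  then have p: "min_d V \<gamma>0 \<le> min_d V \<gamma>" "le_d V (top_cfg N r \<gamma>) (top_cfg N r \<gamma>0)"
    using part2[OF assms] by auto
  show "le_d V (bot_cfg V \<gamma>0) \<gamma>"
    unfolding le_d_def bot_cfg_def using p(1) min_d_le[OF assms] by (auto intro: order_trans)
  show "le_d V \<gamma> (top_cfg N r \<gamma>0)"
    using p(2) le_top[of V \<gamma> N r] unfolding le_d_def by (meson order_trans)
qed

end
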